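(* Let $K\ge L\ge 1$ and $T\ge 1$ be integers, let $\mathbb{F}_p$ be a finite field, $q$ a positive integer, $\omega\in\mathbb{F}_p$ a primitive $q$-th root of unity (so $q\mid p-1$), and consider the polynomial-code PDMM scheme with degree vectors of $\mathrm{GASP}_{\mathrm{small}}$ (resp. $\mathrm{GASP}_{\mathrm{big}}$), $N$ workers where $N$ is the number of distinct integers in its degree table, and evaluation points $\rho_n=\omega^{n-1}$, $n=1,\dots,N$. If $q$ is larger than the largest entry of the degree table and $q$ is coprime to $K$, then the $\mathrm{GASP}_{\mathrm{small}}$ scheme is decodable and $T$-private. For $\mathrm{GASP}_{\mathrm{big}}$, the condition that $q$ is larger than the largest entry of the degree table (together with $\omega$ being a primitive $q$-th root of unity) suffices for the scheme to be decodable and $T$-private.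
   Context: Generalized arithmetic progression: $\mathrm{GAP}(\ell,x,r)\in\mathbb{Z}^\ell$ is the vector consisting of the first $\ell$ terms of $(0,1,\dots,r-1,\;x,x+1,\dots,x+r-1,\;2x,2x+1,\dots,2x+r-1,\dots)$. For $1\le r\le\min(K,T)$, $\mathrm{GASP}_r(K,L,T)$ is given by integer degree vectors $\boldsymbol{\alpha}^{(p)}=(0,1,\dots,K-1)$, $\boldsymbol{\alpha}^{(s)}=KL+\mathrm{GAP}(T,K,r)$, $\boldsymbol{\beta}^{(p)}=K\cdot(0,1,\dots,L-1)$, $\boldsymbol{\beta}^{(s)}=KL+(0,1,\dots,T-1)$ (adding a scalar to a vector adds it to each entry). $\mathrm{GASP}_{\mathrm{small}}$ is the case $r=1$ and $\mathrm{GASP}_{\mathrm{big}}$ the case $r=\min(K,T)$. The degree table is the set of all sums $a+b$ with $a$ an entry of $\boldsymbol{\alpha}^{(p)}$ or $\boldsymbol{\alpha}^{(s)}$ and $b$ an entry of $\boldsymbol{\beta}^{(p)}$ or $\boldsymbol{\beta}^{(s)}$. The scheme: $\mathbf A\in\mathbb{F}_p^{r_A\times c_A}$, $\mathbf B\in\mathbb{F}_p^{c_A\times c_B}$ with arbitrary joint distribution, $K\mid r_A$, $L\mid c_B$; $\mathbf A=(\mathbf A_1^T\cdots\mathbf A_K^T)^T$, $\mathbf B=(\mathbf B_1\cdots\mathbf B_L)$ split into equal blocks. Random $\mathbf R_1,\dots,\mathbf R_T$ (size of $\mathbf A_i$) and $\mathbf S_1,\dots,\mathbf S_T$ (size of $\mathbf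 B_j$) are i.i.d. uniform and independent of $(\mathbf A,\mathbf B)$. $\mathbf F(x)=\sum_i\mathbf A_ix^{\alpha^{(p)}_i}+\sum_i\mathbf R_ix^{\alpha^{(s)}_i}$, $\mathbf G(x)=\sum_j\mathbf B_jx^{\beta^{(p)}_j}+\sum_j\mathbf S_jx^{\beta^{(s)}_j}$; worker $n$ receives $\mathbf F(\rho_n),\mathbf G(\rho_n)$ and returns $\mathbf F(\rho_n)\mathbf G(\rho_n)$. $T$-private: for every set of $T$ workers, the mutual information between $(\mathbf A,\mathbf B)$ and their received data is zero. Decodable: the main node can compute all $\mathbf A_i\mathbf B_j$ from the $N$ returned products. *)

theory Defs
  imports "HOL-Probability.Probability" "Jordan_Normal_Form.Matrix"
begin

text \<open>GAP(l,x,r) is the vector of the first l terms of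
  0,1,...,r-1, x,x+1,...,x+r-1, 2x,...; its i-th entry (0-based, i < l) is
  (i div r) * x + i mod r.\<close>
definition GAP :: "nat \<Rightarrow> nat \<Rightarrow> nat \<Rightarrow> nat \<Rightarrow> nat" where
  "GAP l x r i = (i div r) * x + i mod r"

text \<open>Degree vectors of GASP_r(K,L,T), as 0-based index functions
  (alpha_p has length K, alpha_s length T, beta_p length L, beta_s length T).\<close>
definition gasp_alpha_p :: "nat \<Rightarrow> nat \<Rightarrow> nat \<Rightarrow> nat \<Rightarrow> nat \<Rightarrow> nat" where
  "gasp_alpha_p r K L T i = i"
definition gasp_alpha_s :: "nat \<Rightarrow> nat \<Rightarrow> nat \<Rightarrow> nat \<Rightarrow> nat \<Rightarrow> nat" where
  "gasp_alpha_s r K L T i = K * L + GAP T K r i"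
definition gasp_beta_p :: "nat \<Rightarrow> nat \<Rightarrow> nat \<Rightarrow> nat \<Rightarrow> nat \<Rightarrow> nat" where
  "gasp_beta_p r K L T j = K * j"
definition gasp_beta_s :: "nat \<Rightarrow> nat \<Rightarrow> nat \<Rightarrow> nat \<Rightarrow> nat \<Rightarrow> nat" where
  "gasp_beta_s r K L T j = K * L + j"

definition degree_table ::
  "nat \<Rightarrow> nat \<Rightarrow> nat \<Rightarrow> (nat \<Rightarrow> nat) \<Rightarrow> (nat \<Rightarrow> nat) \<Rightarrow> (nat \<Rightarrow> nat) \<Rightarrow> (nat \<Rightarrow> nat) \<Rightarrow> nat set" where
  "degree_table K L T ap as bp bs =
     {a + b | a b. (a \<in> ap ` {..<K} \<union> as ` {..<T}) \<and> (b \<in> bp ` {..<L} \<union> bs ` {..<T})}"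

definition gasp_table :: "nat \<Rightarrow> nat \<Rightarrow> nat \<Rightarrow> nat \<Rightarrow> nat set" where
  "gasp_table r K L T = degree_table K L T (gasp_alpha_p r K L T) (gasp_alpha_s r K L T)
                           (gasp_beta_p r K L T) (gasp_beta_s r K L T)"

definition primitive_root_of_unity :: "nat \<Rightarrow> 'a::field \<Rightarrow> bool" where
  "primitive_root_of_unity q w \<longleftrightarrow> 0 < q \<and> w ^ q = 1 \<and> (\<forall>k. 0 < k \<and> k < q \<longrightarrow> w ^ k \<noteq> 1)"

definition blockA :: "nat \<Rightarrow> 'a mat \<Rightarrow> nat \<Rightarrow> 'a mat" where
  "blockA K A i = mat (dim_row A div K) (dim_col A) (\<lambda>(a, b). A $$ (i * (dim_row A div K) + a, b))"

definition blockB :: "nat \<Rightarrow> 'a mat \<Rightarrow> nat \<Rightarrow> 'a mat" where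
  "blockB L B j = mat (dim_row B) (dim_col B div L) (\<lambda>(a, b). B $$ (a, j * (dim_col B div L) + b))"

definition encF :: "nat \<Rightarrow> nat \<Rightarrow> (nat \<Rightarrow> nat) \<Rightarrow> (nat \<Rightarrow> nat) \<Rightarrow> 'a::comm_ring_1 mat
                     \<Rightarrow> 'a mat list \<Rightarrow> 'a \<Rightarrow> 'a mat" where
  "encF K T ap as A Rs x = mat (dim_row A div K) (dim_col A) (\<lambda>(a, b).
      (\<Sum>i<K. blockA K A i $$ (a, b) * x ^ ap i) + (\<Sum>i<T. (Rs ! i) $$ (a, b) * x ^ as i))"

definition encG :: "nat \<Rightarrow> nat \<Rightarrow> (nat \<Rightarrow> nat) \<Rightarrow> (nat \<Rightarrow> nat) \<Rightarrow> 'a::comm_ring_1 mat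
                     \<Rightarrow> 'a mat list \<Rightarrow> 'a \<Rightarrow> 'a mat" where
  "encG L T bp bs B Ss x = mat (dim_row B) (dim_col B div L) (\<lambda>(a, b).
      (\<Sum>j<L. blockB L B j $$ (a, b) * x ^ bp j) + (\<Sum>j<T. (Ss ! j) $$ (a, b) * x ^ bs j))"

text \<open>Lists of T random matrices of a given size; the uniform distribution on this set
  is the same as T i.i.d. uniform matrices.\<close>
definition mat_lists :: "nat \<Rightarrow> nat \<Rightarrow> nat \<Rightarrow> 'a mat list set" where
  "mat_lists T m n = {xs. length xs = T \<and> set xs \<subseteq> carrier_mat m n}"

definition decodable ::
  "nat \<Rightarrow> nat \<Rightarrow> nat \<Rightarrow> (nat \<Rightarrow> nat) \<Rightarrow> (nat \<Rightarrow> nat) \<Rightarrow> (nat \<Rightarrow> nat) \<Rightarrow> (nat \<Rightarrow> nat)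
   \<Rightarrow> nat \<Rightarrow> nat \<Rightarrow> nat \<Rightarrow> nat \<Rightarrow> (nat \<Rightarrow> 'a::comm_ring_1) \<Rightarrow> bool" where
  "decodable K L T ap as bp bs rA cA cB N rho \<longleftrightarrow>
     (\<exists>dec :: 'a mat list \<Rightarrow> nat \<Rightarrow> nat \<Rightarrow> 'a mat.
        \<forall>A \<in> carrier_mat rA cA. \<forall>B \<in> carrier_mat cA cB.
        \<forall>Rs \<in> mat_lists T (rA div K) cA. \<forall>Ss \<in> mat_lists T cA (cB div L).
        \<forall>i<K. \<forall>j<L.
          dec (map (\<lambda>n. encF K T ap as A Rs (rho n) * encG L T bp bs B Ss (rho n)) [1..<N+1]) i j
            = blockA K A i * blockB L B j)"

text \<open>The sample space is ((A,B),Rs,Ss), with Rs, Ss uniform and independent of (A,B).\<close>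
definition t_private ::
  "nat \<Rightarrow> nat \<Rightarrow> nat \<Rightarrow> (nat \<Rightarrow> nat) \<Rightarrow> (nat \<Rightarrow> nat) \<Rightarrow> (nat \<Rightarrow> nat) \<Rightarrow> (nat \<Rightarrow> nat)
   \<Rightarrow> nat \<Rightarrow> nat \<Rightarrow> nat \<Rightarrow> nat \<Rightarrow> (nat \<Rightarrow> 'a::{comm_ring_1,finite}) \<Rightarrow> bool" where
  "t_private K L T ap as bp bs rA cA cB N rho \<longleftrightarrow>
     (\<forall>(\<mu> :: ('a mat \<times> 'a mat) pmf) W.
        set_pmf \<mu> \<subseteq> carrier_mat rA cA \<times> carrier_mat cA cB \<longrightarrow>
        W \<subseteq> {1..N} \<longrightarrow> card W = T \<longrightarrow>
        (let P = pair_pmf \<mu> (pair_pmf (pmf_of_set (mat_lists T (rA div K) cA))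
                                       (pmf_of_set (mat_lists T cA (cB div L))));
             X = (\<lambda>(AB :: 'a mat \<times> 'a mat, _ :: 'a mat list \<times> 'a mat list). AB);
             Y = (\<lambda>((A, B), (Rs, Ss)).
                    map (\<lambda>n. (encF K T ap as A Rs (rho n), encG L T bp bs B Ss (rho n)))
                        (sorted_list_of_set W))
         in prob_space.mutual_information (measure_pmf P) 2
              (count_space (X ` space (measure_pmf P))) (count_space (Y ` space (measure_pmf P)))
              X Y = 0))"

end

theory Submission
  imports Defs "HOL-Computational_Algebra.Polynomial"
begin

lemma prim_pow_eq_1:
  fixes w :: "'a::field"
  assumes "primitive_root_of_unity q w" "w ^ k = 1"
  shows "q dvd k"
proof -
  have q: "0 < q" "w ^ q = 1" and pr: "\<And>k. 0 < k \<Longrightarrow> k < q \<Longrightarrow> w ^ k \<noteq> 1"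
    using assms(1) unfolding primitive_root_of_unity_def by auto
  have "w ^ k = w ^ (q * (k div q) + k mod q)" by simp
  also have "\<dots> = (w ^ q) ^ (k div q) * w ^ (k mod q)" by (simp only: power_add power_mult)
  finally have "w ^ k = (w ^ q) ^ (k div q) * w ^ (k mod q)" .
  then have "w ^ (k mod q) = 1" using assms(2) q by simp
  then have "k mod q = 0" using pr[of "k mod q"] q by (auto intro: Nat.gr0I)
  then show ?thesis by auto
qed

lemma prim_nonzero:
  fixes w :: "'a::field"
  assumes "primitive_root_of_unity q w" shows "w \<noteq> 0"
proof
  assume "w = 0"
  then show False using assms unfolding primitive_root_of_unity_def by (auto simp: power_0_left)
qed

lemma prim_inj:
  fixes w :: "'a::field"
  assumes "primitive_root_of_unity q w" "coprime q c"
  shows "inj_on (\<lambda>n. w ^ (c * n)) {..<q}"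
proof (rule inj_onI)
  have w0: "w \<noteq> 0" using prim_nonzero[OF assms(1)] .
  have main: "a = b" if "a \<le> b" "a < q" "b < q" "w ^ (c * a) = w ^ (c * b)" for a b
  proof -
    have e: "c * b = c * a + c * (b - a)" using that(1) by (simp add: diff_mult_distrib2)
    have "w ^ (c * b) = w ^ (c * a) * w ^ (c * (b - a))" by (subst e) (rule power_add)
    then have "w ^ (c * (b - a)) = 1" using that(4) w0 by simp
    then have "q dvd c * (b - a)" using prim_pow_eq_1[OF assms(1)] by blast
    then have "q dvd (b - a)" using assms(2) by (simp add: coprime_dvd_mult_right_iff)
    show ?thesis
    proof (rule ccontr)
      assume "a \<noteq> b"
      then have "0 < b - a" "b - a < q" using that by auto
      then show False using nat_dvd_not_less \<open>q dvd (b - a)\<close> by blast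
    qed
  qed
  fix a b assume "a \<in> {..<q}" "b \<in> {..<q}" "w ^ (c * a) = w ^ (c * b)"
  then show "a = b" using main[of a b] main[of b a] by (cases "a \<le> b") auto
qed

lemma vander_roots:
  fixes z :: "nat \<Rightarrow> 'a::field"
  assumes "finite W" "card W = T" "inj_on z W"
    and "\<And>n. n \<in> W \<Longrightarrow> (\<Sum>i<T. v i * z n ^ i) = 0"
  shows "\<And>i. i < T \<Longrightarrow> v i = 0"
proof -
  define p where "p = (\<Sum>i<T. monom (v i) i)"
  have pe: "poly p y = (\<Sum>i<T. v i * y ^ i)" for y
    unfolding p_def by (simp add: poly_sum poly_monom)
  have ce: "coeff p j = (if j < T then v j else 0)" for j
    unfolding p_def by (simp add: coeff_sum coeff_monom)
  have "p = 0"
  proof (rule ccontr)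
    assume p0: "p \<noteq> 0"
    then have T0: "T > 0" unfolding p_def by (auto intro: Nat.gr0I)
    have "degree p < T"
    proof -
      have "degree p \<le> T - 1"
        by (rule degree_le) (auto simp: ce)
      then show ?thesis using T0 by linarith
    qed
    moreover have "z ` W \<subseteq> {x. poly p x = 0}" using assms(4) by (auto simp: pe)
    then have "card (z ` W) \<le> card {x. poly p x = 0}"
      by (rule card_mono[OF poly_roots_finite[OF p0]])
    then have "T \<le> degree p" using card_poly_roots_bound[OF p0] assms(2,3)
      by (simp add: card_image)
    ultimately show False by simp
  qed
  then show "\<And>i. i < T \<Longrightarrow> v i = 0" using ce by (metis coeff_0)
qed

lemma poly_sum_support:
  fixes p :: "'a::comm_semiring_1 poly"
  assumes "finite S" "\<And>d. d \<notin> S \<Longrightarrow> coeff p d = 0"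
  shows "poly p y = (\<Sum>d\<in>S. coeff p d * y ^ d)"
proof -
  have "poly p y = (\<Sum>d\<in>{..degree p}. coeff p d * y ^ d)" by (rule poly_altdef)
  also have "\<dots> = (\<Sum>d\<in>S \<union> {..degree p}. coeff p d * y ^ d)"
    by (rule sum.mono_neutral_left) (use assms in \<open>auto simp: coeff_eq_0\<close>)
  also have "\<dots> = (\<Sum>d\<in>S. coeff p d * y ^ d)"
    by (rule sum.mono_neutral_right) (use assms in auto)
  finally show ?thesis .
qed

lemma sparse_zero:
  fixes w :: "'a::field"
  assumes "finite D" "card D = N" "inj_on (\<lambda>d. w ^ d) D"
    and "\<And>k. k < N \<Longrightarrow> (\<Sum>d\<in>D. c d * (w ^ k) ^ d) = 0"
    and "d0 \<in> D"
  shows "c d0 = 0"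
proof -
  define L where "L = (\<Prod>d\<in>D - {d0}. [:- (w ^ d), 1:])"
  have "degree L \<le> (\<Sum>d\<in>D - {d0}. degree [:- (w ^ d), 1:])"
    unfolding L_def using degree_prod_sum_le[of "D - {d0}" "\<lambda>d. [:- (w ^ d), 1:]"] assms(1)
    by (simp add: comp_def)
  also have "\<dots> = card (D - {d0})" by simp
  also have "\<dots> = N - 1" using assms by (simp add: card_Diff_singleton)
  finally have degL: "degree L < N" using assms(2,5,1) card_gt_0_iff[of D] by auto
  have polyL: "poly L y = (\<Sum>k<N. coeff L k * y ^ k)" for y
    using poly_sum_support[of "{..<N}" L y] degL by (auto simp: coeff_eq_0)
  have "0 = (\<Sum>k<N. coeff L k * (\<Sum>d\<in>D. c d * (w ^ k) ^ d))"
    using assms(4) by simp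
  also have "\<dots> = (\<Sum>d\<in>D. c d * (\<Sum>k<N. coeff L k * (w ^ d) ^ k))"
    by (simp add: sum_distrib_left sum_distrib_right sum.swap[of _ D] power_mult[symmetric]
        mult.commute mult.left_commute)
  also have "\<dots> = (\<Sum>d\<in>D. c d * poly L (w ^ d))" by (simp add: polyL)
  also have "\<dots> = c d0 * poly L (w ^ d0)"
  proof (rule sum.remove[OF assms(1,5), THEN trans])
    have "poly L (w ^ d) = 0" if "d \<in> D - {d0}" for d
      unfolding L_def poly_prod using that assms(1) by (auto intro!: prod_zero)
    then show "c d0 * poly L (w ^ d0) + (\<Sum>d\<in>D - {d0}. c d * poly L (w ^ d)) = c d0 * poly L (w ^ d0)"
      by simp
  qed
  finally have "c d0 * poly L (w ^ d0) = 0" by simp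
  moreover have "poly L (w ^ d0) \<noteq> 0"
    unfolding L_def poly_prod using assms(1,3,5)
    by (auto simp: inj_on_def)
  ultimately show ?thesis by simp
qed

lemma coeff_mult_support:
  assumes "\<And>i. coeff p i \<noteq> 0 \<Longrightarrow> i \<in> SA" "\<And>j. coeff q j \<noteq> 0 \<Longrightarrow> j \<in> SB"
    "d \<notin> {a + b |a b. a \<in> SA \<and> b \<in> SB}"
  shows "coeff (p * q) d = 0"
  unfolding coeff_mult
proof (intro sum.neutral ballI)
  fix i assume i: "i \<in> {..d}"
  show "coeff p i * coeff q (d - i) = 0"
  proof (rule ccontr)
    assume "coeff p i * coeff q (d - i) \<noteq> 0"
    then have "coeff p i \<noteq> 0" "coeff q (d - i) \<noteq> 0" by auto
    then have "i \<in> SA" "d - i \<in> SB" using assms(1,2) by auto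
    moreover have "d = i + (d - i)" using i by auto
    ultimately show False using assms(3) by blast
  qed
qed

lemma coeff_mult_low:
  assumes "(\<forall>i<m. coeff p i = 0) \<or> (\<forall>i<m. coeff q i = 0)" "d < m"
  shows "coeff (p * q) d = 0"
proof (cases "\<forall>i<m. coeff p i = 0")
  case True
  then show ?thesis unfolding coeff_mult using assms(2) by (intro sum.neutral) auto
next
  case False
  then have "\<forall>i<m. coeff q i = 0" using assms(1) by blast
  then show ?thesis unfolding coeff_mult using assms(2) by (intro sum.neutral) auto
qed

definition epol :: "nat \<Rightarrow> nat \<Rightarrow> (nat \<Rightarrow> nat) \<Rightarrow> (nat \<Rightarrow> nat) \<Rightarrow> (nat \<Rightarrow> 'a mat)
   \<Rightarrow> 'a mat list \<Rightarrow> nat \<times> nat \<Rightarrow> 'a::comm_ring_1 poly" where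
  "epol n T e1 e2 Xb Rs ij = (\<Sum>i<n. monom (Xb i $$ ij) (e1 i)) + (\<Sum>i<T. monom ((Rs ! i) $$ ij) (e2 i))"

lemma poly_epol: "poly (epol n T e1 e2 Xb Rs ij) x =
   (\<Sum>i<n. Xb i $$ ij * x ^ e1 i) + (\<Sum>i<T. (Rs ! i) $$ ij * x ^ e2 i)"
  unfolding epol_def by (simp add: poly_sum poly_monom)

lemma coeff_epol_support:
  assumes "coeff (epol n T e1 e2 Xb Rs ij) d \<noteq> 0"
  shows "d \<in> e1 ` {..<n} \<union> e2 ` {..<T}"
proof (rule ccontr)
  assume d: "d \<notin> e1 ` {..<n} \<union> e2 ` {..<T}"
  have "(\<Sum>i<n. coeff (monom (Xb i $$ ij) (e1 i)) d) = 0"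
    by (rule sum.neutral) (use d in \<open>auto simp: coeff_monom\<close>)
  moreover have "(\<Sum>i<T. coeff (monom ((Rs ! i) $$ ij) (e2 i)) d) = 0"
    by (rule sum.neutral) (use d in \<open>auto simp: coeff_monom\<close>)
  ultimately have "coeff (epol n T e1 e2 Xb Rs ij) d = 0"
    unfolding epol_def by (simp add: coeff_sum)
  then show False using assms by simp
qed

lemma encF_entry:
  assumes "a < dim_row A div K" "c < dim_col A"
  shows "encF K T ap as A Rs x $$ (a, c) = poly (epol K T ap as (blockA K A) Rs (a, c)) x"
  unfolding encF_def poly_epol using assms by simp

lemma encG_entry:
  assumes "c < dim_row B" "b < dim_col B div L"
  shows "encG L T bp bs B Ss x $$ (c, b) = poly (epol L T bp bs (blockB L B) Ss (c, b)) x"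
  unfolding encG_def poly_epol using assms by simp

lemma mult_entry:
  assumes "M \<in> carrier_mat m k" "N \<in> carrier_mat k n" "a < m" "b < n"
  shows "(M * N) $$ (a, b) = (\<Sum>c<k. M $$ (a, c) * N $$ (c, b))"
proof -
  have dims: "dim_row M = m" "dim_col M = k" "dim_row N = k" "dim_col N = n" using assms by auto
  have "(M * N) $$ (a, b) = Matrix.row M a \<bullet> col N b" using assms(3,4) dims by simp
  also have "\<dots> = (\<Sum>c\<in>{0..<k}. Matrix.row M a $ c * col N b $ c)"
    unfolding scalar_prod_def using dims by simp
  also have "\<dots> = (\<Sum>c<k. M $$ (a, c) * N $$ (c, b))"
    unfolding atLeast0LessThan using dims assms(3,4) by (intro sum.cong refl) simp
  finally show ?thesis .
qed

lemma divK_eq: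
  fixes K :: nat
  assumes "i < K" "i0 < K"
  shows "(i + K * j = i0 + K * j0) \<longleftrightarrow> (i = i0 \<and> j = j0)"
proof
  assume h: "i + K * j = i0 + K * j0"
  then have "(i + K * j) mod K = (i0 + K * j0) mod K" by simp
  then have "i = i0" using assms by simp
  with h assms show "i = i0 \<and> j = j0" by simp
qed simp

lemma coeff_low_part:
  fixes \<alpha> \<beta> :: "nat \<Rightarrow> 'a::comm_ring_1"
  assumes "i0 < K" "j0 < L"
  shows "coeff ((\<Sum>i<K. monom (\<alpha> i) i) * (\<Sum>j<L. monom (\<beta> j) (K * j))) (i0 + K * j0) = \<alpha> i0 * \<beta> j0"
proof -
  have "(\<Sum>i<K. monom (\<alpha> i) i) * (\<Sum>j<L. monom (\<beta> j) (K * j)) =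
        (\<Sum>i<K. \<Sum>j<L. monom (\<alpha> i * \<beta> j) (i + K * j))"
    by (simp add: sum_product mult_monom)
  then have "coeff ((\<Sum>i<K. monom (\<alpha> i) i) * (\<Sum>j<L. monom (\<beta> j) (K * j))) (i0 + K * j0)
     = (\<Sum>i<K. \<Sum>j<L. if i + K * j = i0 + K * j0 then \<alpha> i * \<beta> j else 0)"
    by (simp add: coeff_sum coeff_monom)
  also have "\<dots> = (\<Sum>i<K. if i = i0 then (\<Sum>j<L. if j = j0 then \<alpha> i * \<beta> j else 0) else 0)"
    by (intro sum.cong refl) (auto simp: divK_eq[OF _ assms(1)])
  also have "\<dots> = \<alpha> i0 * \<beta> j0" using assms by simp
  finally show ?thesis .
qed

lemma blockA_carrier: "A \<in> carrier_mat rA cA \<Longrightarrow> blockA K A i \<in> carrier_mat (rA div K) cA"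
  unfolding blockA_def by auto

lemma blockB_carrier: "B \<in> carrier_mat cA cB \<Longrightarrow> blockB L B j \<in> carrier_mat cA (cB div L)"
  unfolding blockB_def by auto

lemma encF_carrier: "A \<in> carrier_mat rA cA \<Longrightarrow> encF K T ap as A Rs x \<in> carrier_mat (rA div K) cA"
  unfolding encF_def by auto

lemma encG_carrier: "B \<in> carrier_mat cA cB \<Longrightarrow> encG L T bp bs B Ss x \<in> carrier_mat cA (cB div L)"
  unfolding encG_def by auto

definition qpol where
  "qpol K L T ap as bp bs cA A B Rs Ss a b =
     (\<Sum>c<cA. epol K T ap as (blockA K A) Rs (a, c) * epol L T bp bs (blockB L B) Ss (c, b))"

lemma qpol_eval:
  assumes "A \<in> carrier_mat rA cA" "B \<in> carrier_mat cA cB" "a < rA div K" "b < cB div L"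
  shows "(encF K T ap as A Rs x * encG L T bp bs B Ss x) $$ (a, b) =
         poly (qpol K L T ap as bp bs cA A B Rs Ss a b) x"
proof -
  have "(encF K T ap as A Rs x * encG L T bp bs B Ss x) $$ (a, b) =
     (\<Sum>c<cA. encF K T ap as A Rs x $$ (a, c) * encG L T bp bs B Ss x $$ (c, b))"
    by (rule mult_entry[OF encF_carrier[OF assms(1)] encG_carrier[OF assms(2)] assms(3,4)])
  also have "\<dots> = (\<Sum>c<cA. poly (epol K T ap as (blockA K A) Rs (a, c)) x *
                            poly (epol L T bp bs (blockB L B) Ss (c, b)) x)"
    using assms by (intro sum.cong refl) (simp add: encF_entry encG_entry)
  also have "\<dots> = poly (qpol K L T ap as bp bs cA A B Rs Ss a b) x"
    unfolding qpol_def by (simp add: poly_sum)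
  finally show ?thesis .
qed

lemma qpol_support:
  assumes "d \<notin> degree_table K L T ap as bp bs"
  shows "coeff (qpol K L T ap as bp bs cA A B Rs Ss a b) d = 0"
  unfolding qpol_def coeff_sum
proof (intro sum.neutral ballI)
  fix c
  show "coeff (epol K T ap as (blockA K A) Rs (a, c) * epol L T bp bs (blockB L B) Ss (c, b)) d = 0"
  proof (rule coeff_mult_support[OF coeff_epol_support coeff_epol_support])
    show "d \<notin> {x + y |x y. x \<in> ap ` {..<K} \<union> as ` {..<T} \<and> y \<in> bp ` {..<L} \<union> bs ` {..<T}}"
      using assms unfolding degree_table_def by simp
  qed
qed

lemma low_coeff_zero:
  assumes "\<And>i. i < T \<Longrightarrow> e i \<ge> m"
  shows "\<forall>d<m. coeff (\<Sum>i<T. monom (f i) (e i)) d = 0"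
proof (intro allI impI)
  fix d assume d: "d < m"
  show "coeff (\<Sum>i<T. monom (f i) (e i)) d = 0"
    unfolding coeff_sum
  proof (rule sum.neutral, rule ballI)
    fix x assume "x \<in> {..<T}"
    then have "m \<le> e x" using assms by simp
    then show "coeff (monom (f x) (e x)) d = 0" using d by (simp add: coeff_monom)
  qed
qed

lemma qpol_coeff:
  assumes ap: "\<And>i. i < K \<Longrightarrow> ap i = i" and bp: "\<And>j. j < L \<Longrightarrow> bp j = K * j"
    and as: "\<And>i. i < T \<Longrightarrow> as i \<ge> K * L" and bs: "\<And>j. j < T \<Longrightarrow> bs j \<ge> K * L"
    and i0: "i0 < K" and j0: "j0 < L"
    and A: "A \<in> carrier_mat rA cA" and B: "B \<in> carrier_mat cA cB"
    and a: "a < rA div K" and b: "b < cB div L"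
  shows "coeff (qpol K L T ap as bp bs cA A B Rs Ss a b) (i0 + K * j0) = (blockA K A i0 * blockB L B j0) $$ (a, b)"
proof -
  have dlt: "i0 + K * j0 < K * L"
  proof -
    have "i0 + K * j0 < K + K * j0" using i0 by simp
    also have "\<dots> = K * (j0 + 1)" by simp
    also have "\<dots> \<le> K * L" using j0 by (intro mult_le_mono2) simp
    finally show ?thesis .
  qed
  have each: "coeff (epol K T ap as (blockA K A) Rs (a, c) * epol L T bp bs (blockB L B) Ss (c, b)) (i0 + K * j0)
     = blockA K A i0 $$ (a, c) * blockB L B j0 $$ (c, b)" for c
  proof -
    define fA where "fA = (\<Sum>i<K. monom (blockA K A i $$ (a, c)) i)"
    define fR where "fR = (\<Sum>i<T. monom ((Rs ! i) $$ (a, c)) (as i))"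
    define gB where "gB = (\<Sum>j<L. monom (blockB L B j $$ (c, b)) (K * j))"
    define gS where "gS = (\<Sum>j<T. monom ((Ss ! j) $$ (c, b)) (bs j))"
    have eF: "epol K T ap as (blockA K A) Rs (a, c) = fA + fR"
      unfolding epol_def fA_def fR_def by (intro arg_cong2[where f="(+)"] sum.cong refl) (simp_all add: ap)
    have eG: "epol L T bp bs (blockB L B) Ss (c, b) = gB + gS"
      unfolding epol_def gB_def gS_def by (intro arg_cong2[where f="(+)"] sum.cong refl) (simp_all add: bp)
    have fR0: "\<forall>d<K * L. coeff fR d = 0" unfolding fR_def by (rule low_coeff_zero) (rule as)
    have gS0: "\<forall>d<K * L. coeff gS d = 0" unfolding gS_def by (rule low_coeff_zero) (rule bs)
    have "(fA + fR) * (gB + gS) = fA * gB + fA * gS + fR * gB + fR * gS" by (simp add: algebra_simps)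
    then have "coeff ((fA + fR) * (gB + gS)) (i0 + K * j0) = coeff (fA * gB) (i0 + K * j0)"
      using coeff_mult_low[of "K * L" fA gS, OF _ dlt] coeff_mult_low[of "K * L" fR gB, OF _ dlt]
        coeff_mult_low[of "K * L" fR gS, OF _ dlt] fR0 gS0 by simp
    also have "\<dots> = blockA K A i0 $$ (a, c) * blockB L B j0 $$ (c, b)"
      unfolding fA_def gB_def by (rule coeff_low_part[OF i0 j0])
    finally show ?thesis using eF eG by simp
  qed
  have "coeff (qpol K L T ap as bp bs cA A B Rs Ss a b) (i0 + K * j0) =
        (\<Sum>c<cA. blockA K A i0 $$ (a, c) * blockB L B j0 $$ (c, b))"
    unfolding qpol_def coeff_sum using each by simp
  also have "\<dots> = (blockA K A i0 * blockB L B j0) $$ (a, b)"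
    by (rule mult_entry[OF blockA_carrier[OF A] blockB_carrier[OF B] a b, symmetric])
  finally show ?thesis .
qed

lemma finite_degree_table: "finite (degree_table K L T ap as bp bs)"
proof -
  have "degree_table K L T ap as bp bs \<subseteq>
     (\<lambda>(x, y). x + y) ` ((ap ` {..<K} \<union> as ` {..<T}) \<times> (bp ` {..<L} \<union> bs ` {..<T}))"
    unfolding degree_table_def by auto
  then show ?thesis by (rule finite_subset) auto
qed

lemma decode_unique:
  fixes w :: "'a::field"
  assumes ap: "\<And>i. i < K \<Longrightarrow> ap i = i" and bp: "\<And>j. j < L \<Longrightarrow> bp j = K * j"
    and as: "\<And>i. i < T \<Longrightarrow> as i \<ge> K * L" and bs: "\<And>j. j < T \<Longrightarrow> bs j \<ge> K * L"
    and D: "D = degree_table K L T ap as bp bs" and inj: "inj_on (\<lambda>d. w ^ d) D" and N: "N = card D"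
    and A: "A \<in> carrier_mat rA cA" and B: "B \<in> carrier_mat cA cB"
    and A': "A' \<in> carrier_mat rA cA" and B': "B' \<in> carrier_mat cA cB"
    and eq: "map (\<lambda>n. encF K T ap as A Rs (w ^ (n - 1)) * encG L T bp bs B Ss (w ^ (n - 1))) [1..<N+1]
           = map (\<lambda>n. encF K T ap as A' Rs' (w ^ (n - 1)) * encG L T bp bs B' Ss' (w ^ (n - 1))) [1..<N+1]"
    and i0: "i0 < K" and j0: "j0 < L"
  shows "blockA K A i0 * blockB L B j0 = blockA K A' i0 * blockB L B' j0"
proof -
  have c1: "blockA K A i0 * blockB L B j0 \<in> carrier_mat (rA div K) (cB div L)"
    by (rule mult_carrier_mat[OF blockA_carrier[OF A] blockB_carrier[OF B]])
  have c2: "blockA K A' i0 * blockB L B' j0 \<in> carrier_mat (rA div K) (cB div L)"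
    by (rule mult_carrier_mat[OF blockA_carrier[OF A'] blockB_carrier[OF B']])
  have finD: "finite D" using D finite_degree_table by simp
  show ?thesis
  proof (rule eq_matI)
    show "dim_row (blockA K A i0 * blockB L B j0) = dim_row (blockA K A' i0 * blockB L B' j0)"
      using carrier_matD[OF c1] carrier_matD[OF c2] by (simp only:)
    show "dim_col (blockA K A i0 * blockB L B j0) = dim_col (blockA K A' i0 * blockB L B' j0)"
      using carrier_matD[OF c1] carrier_matD[OF c2] by (simp only:)
    fix a b assume "a < dim_row (blockA K A' i0 * blockB L B' j0)" "b < dim_col (blockA K A' i0 * blockB L B' j0)"
    then have a: "a < rA div K" and b: "b < cB div L" using carrier_matD[OF c2] by (simp_all only:)
    define p where "p = qpol K L T ap as bp bs cA A B Rs Ss a b - qpol K L T ap as bp bs cA A' B' Rs' Ss' a b"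
    have pk: "poly p (w ^ k) = 0" if k: "k < N" for k
    proof -
      have "map (\<lambda>n. encF K T ap as A Rs (w ^ (n - 1)) * encG L T bp bs B Ss (w ^ (n - 1))) [1..<N+1] ! k
          = map (\<lambda>n. encF K T ap as A' Rs' (w ^ (n - 1)) * encG L T bp bs B' Ss' (w ^ (n - 1))) [1..<N+1] ! k"
        using eq by (simp only:)
      then have "encF K T ap as A Rs (w ^ k) * encG L T bp bs B Ss (w ^ k)
               = encF K T ap as A' Rs' (w ^ k) * encG L T bp bs B' Ss' (w ^ k)"
        using k by (simp del: upt_Suc)
      then have "(encF K T ap as A Rs (w ^ k) * encG L T bp bs B Ss (w ^ k)) $$ (a, b)
               = (encF K T ap as A' Rs' (w ^ k) * encG L T bp bs B' Ss' (w ^ k)) $$ (a, b)" by simp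
      then show ?thesis unfolding p_def
        using qpol_eval[OF A B a b] qpol_eval[OF A' B' a b] by simp
    qed
    have supp: "coeff p d = 0" if "d \<notin> D" for d
      unfolding p_def coeff_diff using that D by (simp add: qpol_support)
    have sums: "(\<Sum>d\<in>D. coeff p d * (w ^ k) ^ d) = 0" if "k < N" for k
      using pk[OF that] poly_sum_support[OF finD supp, of "w ^ k"] by simp
    have d0: "i0 + K * j0 \<in> D"
      unfolding D degree_table_def
    proof -
      have "i0 \<in> ap ` {..<K}" using ap i0 by (metis imageI lessThan_iff)
      moreover have "K * j0 \<in> bp ` {..<L}" using bp j0 by (metis imageI lessThan_iff)
      ultimately show "i0 + K * j0 \<in> {a + b |a b. (a \<in> ap ` {..<K} \<union> as ` {..<T}) \<and> (b \<in> bp ` {..<L} \<union> bs ` {..<T})}"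
        by blast
    qed
    have "coeff p (i0 + K * j0) = 0"
      by (rule sparse_zero[OF finD N[symmetric] inj sums d0])
    then show "(blockA K A i0 * blockB L B j0) $$ (a, b) = (blockA K A' i0 * blockB L B' j0) $$ (a, b)"
      unfolding p_def coeff_diff
      using qpol_coeff[where Rs=Rs and Ss=Ss, OF ap bp as bs i0 j0 A B a b]
        qpol_coeff[where Rs=Rs' and Ss=Ss', OF ap bp as bs i0 j0 A' B' a b]
      by simp
  qed
qed

lemma decodable_generic:
  fixes w :: "'a::field"
  assumes ap: "\<And>i. i < K \<Longrightarrow> ap i = i" and bp: "\<And>j. j < L \<Longrightarrow> bp j = K * j"
    and as: "\<And>i. i < T \<Longrightarrow> as i \<ge> K * L" and bs: "\<And>j. j < T \<Longrightarrow> bs j \<ge> K * L"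
    and D: "D = degree_table K L T ap as bp bs" and inj: "inj_on (\<lambda>d. w ^ d) D" and N: "N = card D"
  shows "decodable K L T ap as bp bs rA cA cB N (\<lambda>n. w ^ (n - 1))"
proof -
  define V where "V = (\<lambda>t :: 'a mat \<times> 'a mat \<times> 'a mat list \<times> 'a mat list.
      fst t \<in> carrier_mat rA cA \<and> fst (snd t) \<in> carrier_mat cA cB)"
  define prods where "prods = (\<lambda>t :: 'a mat \<times> 'a mat \<times> 'a mat list \<times> 'a mat list.
      map (\<lambda>n. encF K T ap as (fst t) (fst (snd (snd t))) (w ^ (n - 1)) *
               encG L T bp bs (fst (snd t)) (snd (snd (snd t))) (w ^ (n - 1))) [1..<N+1])"
  define dec where "dec = (\<lambda>ys i j. let t = (SOME t. V t \<and> prods t = ys) in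
      blockA K (fst t) i * blockB L (fst (snd t)) j)"
  show ?thesis
    unfolding decodable_def
  proof (intro exI[of _ dec] ballI allI impI)
    fix A B :: "'a mat" and Rs Ss :: "'a mat list" and i j :: nat
    assume A: "A \<in> carrier_mat rA cA" and B: "B \<in> carrier_mat cA cB" and i: "i < K" and j: "j < L"
    define ys where "ys = prods (A, B, Rs, Ss)"
    have h0: "V (A, B, Rs, Ss) \<and> prods (A, B, Rs, Ss) = ys" using A B unfolding V_def ys_def by simp
    define t where "t = (SOME t. V t \<and> prods t = ys)"
    have st: "V t \<and> prods t = ys" unfolding t_def by (rule someI[where P="\<lambda>t. V t \<and> prods t = ys", OF h0])
    have tV: "fst t \<in> carrier_mat rA cA" "fst (snd t) \<in> carrier_mat cA cB"
      using st unfolding V_def by auto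
    have tp: "prods t = prods (A, B, Rs, Ss)" using st unfolding ys_def by simp
    have E: "prods (A, B, Rs, Ss) = prods t" using tp by simp
    have E2: "map (\<lambda>n. encF K T ap as A Rs (w ^ (n - 1)) * encG L T bp bs B Ss (w ^ (n - 1))) [1..<N+1]
      = map (\<lambda>n. encF K T ap as (fst t) (fst (snd (snd t))) (w ^ (n - 1)) *
               encG L T bp bs (fst (snd t)) (snd (snd (snd t))) (w ^ (n - 1))) [1..<N+1]"
      using E unfolding prods_def by (simp only: fst_conv snd_conv)
    have "blockA K A i * blockB L B j = blockA K (fst t) i * blockB L (fst (snd t)) j"
      by (rule decode_unique[OF ap bp as bs D inj N A B tV E2 i j])
    moreover have "dec ys i j = blockA K (fst t) i * blockB L (fst (snd t)) j"
      unfolding dec_def t_def by (simp add: Let_def)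
    ultimately show "dec (map (\<lambda>n. encF K T ap as A Rs (w ^ (n - 1)) * encG L T bp bs B Ss (w ^ (n - 1))) [1..<N + 1]) i j =
           blockA K A i * blockB L B j"
      unfolding ys_def prods_def by simp
  qed
qed

lemma finite_carrier_mat: "finite (carrier_mat m n :: ('a::finite) mat set)"
proof -
  have "carrier_mat m n \<subseteq> (\<lambda>f. mat m n f) ` (PiE ({..<m} \<times> {..<n}) (\<lambda>_. (UNIV :: 'a set)))"
  proof
    fix A :: "'a mat" assume A: "A \<in> carrier_mat m n"
    have "A = mat m n (restrict (\<lambda>ij. A $$ ij) ({..<m} \<times> {..<n}))"
      by (rule eq_matI) (use A in auto)
    moreover have "restrict (\<lambda>ij. A $$ ij) ({..<m} \<times> {..<n}) \<in> PiE ({..<m} \<times> {..<n}) (\<lambda>_. UNIV)"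
      by simp
    ultimately show "A \<in> (\<lambda>f. mat m n f) ` (PiE ({..<m} \<times> {..<n}) (\<lambda>_. UNIV))" by blast
  qed
  moreover have "finite ((\<lambda>f. mat m n f) ` (PiE ({..<m} \<times> {..<n}) (\<lambda>_. (UNIV :: 'a set))))"
    by (intro finite_imageI finite_PiE) auto
  ultimately show ?thesis by (rule finite_subset)
qed

lemma finite_mat_lists: "finite (mat_lists T m n :: ('a::finite) mat list set)"
proof -
  have e: "mat_lists T m n = {xs. set xs \<subseteq> (carrier_mat m n :: 'a mat set) \<and> length xs = T}"
    unfolding mat_lists_def by auto
  show ?thesis unfolding e by (rule finite_lists_length_eq[OF finite_carrier_mat])
qed

lemma mat_lists_ne: "mat_lists T m n \<noteq> ({} :: ('a::zero) mat list set)"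
proof -
  have "replicate T (0\<^sub>m m n) \<in> (mat_lists T m n :: 'a mat list set)"
    unfolding mat_lists_def by auto
  then show ?thesis by blast
qed

lemma enc_uniform:
  fixes x :: "nat \<Rightarrow> 'a::{field,finite}"
  assumes W: "finite W" "card W = T"
    and e: "\<And>i. i < T \<Longrightarrow> e i = E + c * i"
    and x0: "\<And>n. n \<in> W \<Longrightarrow> x n \<noteq> 0"
    and inj: "inj_on (\<lambda>n. x n ^ c) W"
    and f: "\<And>Rs. f Rs = map (\<lambda>n. mat m k (\<lambda>ab. base n ab + (\<Sum>i<T. (Rs ! i) $$ ab * x n ^ e i)))
                             (sorted_list_of_set W)"
  shows "map_pmf f (pmf_of_set (mat_lists T m k)) = pmf_of_set (mat_lists T m k)"
proof -
  define S where "S = (mat_lists T m k :: 'a mat list set)"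
  have into: "f ` S \<subseteq> S"
  proof
    fix ys assume "ys \<in> f ` S"
    then obtain Rs where ys: "ys = f Rs" by blast
    show "ys \<in> S" unfolding S_def mat_lists_def ys f using W by auto
  qed
  have injf: "inj_on f S"
  proof (rule inj_onI)
    fix Rs Rs' assume Rs: "Rs \<in> S" and Rs': "Rs' \<in> S" and eq: "f Rs = f Rs'"
    have lens: "length Rs = T" "length Rs' = T" using Rs Rs' unfolding S_def mat_lists_def by auto
    have car: "Rs ! i \<in> carrier_mat m k" "Rs' ! i \<in> carrier_mat m k" if "i < T" for i
      using Rs Rs' that lens unfolding S_def mat_lists_def by (auto intro: nth_mem)
    have pointn: "mat m k (\<lambda>ab. base n ab + (\<Sum>i<T. (Rs ! i) $$ ab * x n ^ e i)) =
                  mat m k (\<lambda>ab. base n ab + (\<Sum>i<T. (Rs' ! i) $$ ab * x n ^ e i))" if n: "n \<in> W" for n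
    proof -
      have "\<forall>n\<in>set (sorted_list_of_set W). mat m k (\<lambda>ab. base n ab + (\<Sum>i<T. (Rs ! i) $$ ab * x n ^ e i)) =
                  mat m k (\<lambda>ab. base n ab + (\<Sum>i<T. (Rs' ! i) $$ ab * x n ^ e i))"
        using eq unfolding f map_eq_conv by blast
      then show ?thesis using n W by simp
    qed
    have entries: "(Rs ! i) $$ (a, b) = (Rs' ! i) $$ (a, b)" if i: "i < T" and a: "a < m" and b: "b < k" for i a b
    proof -
      define v where "v = (\<lambda>i. (Rs ! i) $$ (a, b) - (Rs' ! i) $$ (a, b))"
      have "(\<Sum>i<T. v i * (x n ^ c) ^ i) = 0" if n: "n \<in> W" for n
      proof -
        have "mat m k (\<lambda>ab. base n ab + (\<Sum>i<T. (Rs ! i) $$ ab * x n ^ e i)) $$ (a, b) =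
              mat m k (\<lambda>ab. base n ab + (\<Sum>i<T. (Rs' ! i) $$ ab * x n ^ e i)) $$ (a, b)"
          using pointn[OF n] by simp
        then have "(\<Sum>i<T. (Rs ! i) $$ (a, b) * x n ^ e i) = (\<Sum>i<T. (Rs' ! i) $$ (a, b) * x n ^ e i)"
          using a b by simp
        then have "(\<Sum>i<T. v i * x n ^ e i) = 0"
          unfolding v_def by (simp add: algebra_simps sum_subtractf)
        moreover have "(\<Sum>i<T. v i * x n ^ e i) = x n ^ E * (\<Sum>i<T. v i * (x n ^ c) ^ i)"
          unfolding sum_distrib_left
          by (intro sum.cong refl) (simp add: e power_add mult_ac flip: power_mult)
        ultimately show ?thesis using x0[OF n] by simp
      qed
      then have "v i = 0" using vander_roots[OF W inj, of v] i by blast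
      then show ?thesis unfolding v_def by simp
    qed
    show "Rs = Rs'"
    proof (rule nth_equalityI)
      show "length Rs = length Rs'" using lens by simp
      fix i assume "i < length Rs"
      then have i: "i < T" using lens by simp
      show "Rs ! i = Rs' ! i"
        by (rule eq_matI) (use car[OF i] entries[OF i] in auto)
    qed
  qed
  have fin: "finite S" unfolding S_def by (rule finite_mat_lists)
  have ne: "S \<noteq> {}" unfolding S_def by (rule mat_lists_ne)
  have "f ` S = S" by (rule endo_inj_surj[OF fin into injf])
  then show ?thesis using map_pmf_of_set_inj[OF injf ne fin] unfolding S_def by simp
qed

lemma emeasure_pair_pmf_rect:
  "emeasure (measure_pmf (pair_pmf p q)) (A \<times> B) = emeasure (measure_pmf p) A * emeasure (measure_pmf q) B"
proof -
  have "emeasure (measure_pmf (pair_pmf p q)) (A \<times> B) = (\<integral>\<^sup>+x. indicator (A \<times> B) x \<partial>pair_pmf p q)"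
    by simp
  also have "\<dots> = (\<integral>\<^sup>+a. \<integral>\<^sup>+b. indicator A a * indicator B b \<partial>q \<partial>p)"
    by (simp add: nn_integral_pair_pmf' indicator_times)
  also have "\<dots> = (\<integral>\<^sup>+a. indicator A a * emeasure (measure_pmf q) B \<partial>p)"
    by (simp add: nn_integral_cmult)
  also have "\<dots> = emeasure (measure_pmf p) A * emeasure (measure_pmf q) B"
    by (simp add: nn_integral_multc)
  finally show ?thesis .
qed

lemma mi_zero:
  fixes P :: "'c pmf" and X :: "'c \<Rightarrow> 'x" and Y :: "'c \<Rightarrow> 'y"
  assumes indep: "map_pmf (\<lambda>w. (X w, Y w)) P = pair_pmf (map_pmf X P) (map_pmf Y P)"
  shows "prob_space.mutual_information (measure_pmf P) b (count_space (X ` space (measure_pmf P)))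
           (count_space (Y ` space (measure_pmf P))) X Y = 0"
proof -
  interpret prob_space "measure_pmf P" by (rule prob_space_measure_pmf)
  define SX where "SX = count_space (X ` space (measure_pmf P))"
  define SY where "SY = count_space (Y ` space (measure_pmf P))"
  have mX: "X \<in> measurable (measure_pmf P) SX" unfolding SX_def by auto
  have mY: "Y \<in> measurable (measure_pmf P) SY" unfolding SY_def by auto
  have mXY: "(\<lambda>w. (X w, Y w)) \<in> measurable (measure_pmf P) (SX \<Otimes>\<^sub>M SY)"
    by (rule measurable_Pair[OF mX mY])
  have eq: "distr (measure_pmf P) SX X \<Otimes>\<^sub>M distr (measure_pmf P) SY Y =
            distr (measure_pmf P) (SX \<Otimes>\<^sub>M SY) (\<lambda>w. (X w, Y w))"
  proof (rule pair_measure_eqI)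
    show "sigma_finite_measure (distr (measure_pmf P) SX X)"
      by (rule prob_space_imp_sigma_finite, rule measure_pmf.prob_space_distr[OF mX])
    show "sigma_finite_measure (distr (measure_pmf P) SY Y)"
      by (rule prob_space_imp_sigma_finite, rule measure_pmf.prob_space_distr[OF mY])
    have "sets (distr (measure_pmf P) SX X \<Otimes>\<^sub>M distr (measure_pmf P) SY Y) = sets (SX \<Otimes>\<^sub>M SY)"
      by (rule sets_pair_measure_cong) simp_all
    then show "sets (distr (measure_pmf P) SX X \<Otimes>\<^sub>M distr (measure_pmf P) SY Y) =
               sets (distr (measure_pmf P) (SX \<Otimes>\<^sub>M SY) (\<lambda>w. (X w, Y w)))" by simp
    fix A B assume A: "A \<in> sets (distr (measure_pmf P) SX X)" and B: "B \<in> sets (distr (measure_pmf P) SY Y)"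
    then have A': "A \<in> sets SX" and B': "B \<in> sets SY" by auto
    have AB: "A \<times> B \<in> sets (SX \<Otimes>\<^sub>M SY)" using A' B' by (rule pair_measureI)
    have "emeasure (distr (measure_pmf P) SX X) A = emeasure (measure_pmf (map_pmf X P)) A"
      using emeasure_distr[OF mX A'] by simp
    moreover have "emeasure (distr (measure_pmf P) SY Y) B = emeasure (measure_pmf (map_pmf Y P)) B"
      using emeasure_distr[OF mY B'] by simp
    moreover have "emeasure (distr (measure_pmf P) (SX \<Otimes>\<^sub>M SY) (\<lambda>w. (X w, Y w))) (A \<times> B) =
                   emeasure (measure_pmf (map_pmf (\<lambda>w. (X w, Y w)) P)) (A \<times> B)"
      using emeasure_distr[OF mXY AB] by simp
    ultimately show "emeasure (distr (measure_pmf P) SX X) A * emeasure (distr (measure_pmf P) SY Y) B =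
           emeasure (distr (measure_pmf P) (SX \<Otimes>\<^sub>M SY) (\<lambda>w. (X w, Y w))) (A \<times> B)"
      unfolding indep emeasure_pair_pmf_rect by simp
  qed
  have sf: "sigma_finite_measure (distr (measure_pmf P) (SX \<Otimes>\<^sub>M SY) (\<lambda>w. (X w, Y w)))"
    by (rule prob_space_imp_sigma_finite, rule measure_pmf.prob_space_distr[OF mXY])
  show ?thesis
    unfolding prob_space.mutual_information_def[OF prob_space_measure_pmf] SX_def[symmetric] SY_def[symmetric] eq
    by (rule sigma_finite_measure.KL_same_eq_0[OF sf])
qed

lemma indep_pair:
  assumes "\<And>ab. ab \<in> set_pmf \<mu> \<Longrightarrow> map_pmf (g ab) Q = D"
  shows "map_pmf (\<lambda>(ab, r). (ab, g ab r)) (pair_pmf \<mu> Q) = pair_pmf \<mu> D"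
proof -
  have "map_pmf (\<lambda>(ab, r). (ab, g ab r)) (pair_pmf \<mu> Q) =
        bind_pmf \<mu> (\<lambda>x. bind_pmf Q (\<lambda>y. return_pmf (x, g x y)))"
    unfolding pair_pmf_def by (simp add: map_bind_pmf)
  also have "\<dots> = bind_pmf \<mu> (\<lambda>x. bind_pmf D (\<lambda>y. return_pmf (x, y)))"
  proof (rule bind_pmf_cong[OF refl])
    fix x assume x: "x \<in> set_pmf \<mu>"
    have "bind_pmf Q (\<lambda>y. return_pmf (x, g x y)) = bind_pmf (map_pmf (g x) Q) (\<lambda>y. return_pmf (x, y))"
      by (simp add: bind_map_pmf)
    then show "bind_pmf Q (\<lambda>y. return_pmf (x, g x y)) = bind_pmf D (\<lambda>y. return_pmf (x, y))"
      using assms[OF x] by simp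
  qed
  also have "\<dots> = pair_pmf \<mu> D" unfolding pair_pmf_def ..
  finally show ?thesis .
qed

lemma zip_map_same: "zip (map f xs) (map g xs) = map (\<lambda>x. (f x, g x)) xs"
  by (induct xs) auto

lemma private_generic:
  fixes rho :: "nat \<Rightarrow> 'a::{field,finite}"
  assumes as: "\<And>i. i < T \<Longrightarrow> as i = Ea + ca * i" and bs: "\<And>j. j < T \<Longrightarrow> bs j = Eb + cb * j"
    and r0: "\<And>n. n \<in> {1..N} \<Longrightarrow> rho n \<noteq> 0"
    and injA: "inj_on (\<lambda>n. rho n ^ ca) {1..N}" and injB: "inj_on (\<lambda>n. rho n ^ cb) {1..N}"
  shows "t_private K L T ap as bp bs rA cA cB N rho"
  unfolding t_private_def
proof (intro allI impI)
  fix \<mu> :: "('a mat \<times> 'a mat) pmf" and W :: "nat set"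
  assume sup: "set_pmf \<mu> \<subseteq> carrier_mat rA cA \<times> carrier_mat cA cB" and W: "W \<subseteq> {1..N}" and cW: "card W = T"
  have finW: "finite W" using W finite_subset by blast
  define UR where "UR = (pmf_of_set (mat_lists T (rA div K) cA) :: 'a mat list pmf)"
  define US where "US = (pmf_of_set (mat_lists T cA (cB div L)) :: 'a mat list pmf)"
  define P where "P = pair_pmf \<mu> (pair_pmf UR US)"
  define X where "X = (\<lambda>(AB :: 'a mat \<times> 'a mat, _ :: 'a mat list \<times> 'a mat list). AB)"
  define Y where "Y = (\<lambda>((A, B), (Rs, Ss)).
                    map (\<lambda>n. (encF K T ap as A Rs (rho n), encG L T bp bs B Ss (rho n)))
                        (sorted_list_of_set W))"
  define g where "g = (\<lambda>(A, B) (Rs, Ss).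
                    map (\<lambda>n. (encF K T ap as A Rs (rho n), encG L T bp bs B Ss (rho n)))
                        (sorted_list_of_set W))"
  define D where "D = map_pmf (\<lambda>(u, v). zip u v) (pair_pmf UR US)"
  have XY: "(\<lambda>w. (X w, Y w)) = (\<lambda>(ab, r). (ab, g ab r))"
    by (auto simp: X_def Y_def g_def fun_eq_iff split: prod.split)
  have gD: "map_pmf (g ab) (pair_pmf UR US) = D" if ab: "ab \<in> set_pmf \<mu>" for ab
  proof -
    obtain A B where abe: "ab = (A, B)" by (cases ab)
    have A: "A \<in> carrier_mat rA cA" and B: "B \<in> carrier_mat cA cB" using sup ab abe by auto
    define FA where "FA = (\<lambda>Rs. map (\<lambda>n. encF K T ap as A Rs (rho n)) (sorted_list_of_set W))"
    define GB where "GB = (\<lambda>Ss. map (\<lambda>n. encG L T bp bs B Ss (rho n)) (sorted_list_of_set W))"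
    have ge: "g ab = (\<lambda>(u, v). zip u v) \<circ> (\<lambda>(Rs, Ss). (FA Rs, GB Ss))"
      by (auto simp: g_def abe FA_def GB_def fun_eq_iff zip_map_same)
    have injW1: "inj_on (\<lambda>n. rho n ^ ca) W" using injA W by (rule inj_on_subset)
    have injW2: "inj_on (\<lambda>n. rho n ^ cb) W" using injB W by (rule inj_on_subset)
    have r0W: "\<And>n. n \<in> W \<Longrightarrow> rho n \<noteq> 0" using r0 W by auto
    have FAu: "map_pmf FA UR = UR" unfolding UR_def
    proof (rule enc_uniform[OF finW cW as r0W injW1])
      fix Rs
      show "FA Rs = map (\<lambda>n. mat (rA div K) cA (\<lambda>ab. (\<lambda>ab. \<Sum>i<K. blockA K A i $$ ab * rho n ^ ap i) ab +
                 (\<Sum>i<T. (Rs ! i) $$ ab * rho n ^ as i))) (sorted_list_of_set W)"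
        unfolding FA_def encF_def using A by (simp add: case_prod_unfold)
    qed
    have GBu: "map_pmf GB US = US" unfolding US_def
    proof (rule enc_uniform[OF finW cW bs r0W injW2])
      fix Ss
      show "GB Ss = map (\<lambda>n. mat cA (cB div L) (\<lambda>ab. (\<lambda>ab. \<Sum>j<L. blockB L B j $$ ab * rho n ^ bp j) ab +
                 (\<Sum>i<T. (Ss ! i) $$ ab * rho n ^ bs i))) (sorted_list_of_set W)"
        unfolding GB_def encG_def using B by (simp add: case_prod_unfold)
    qed
    have "map_pmf (g ab) (pair_pmf UR US) =
          map_pmf (\<lambda>(u, v). zip u v) (map_pmf (\<lambda>(Rs, Ss). (FA Rs, GB Ss)) (pair_pmf UR US))"
      unfolding ge by (simp add: map_pmf_comp comp_def)
    also have "\<dots> = map_pmf (\<lambda>(u, v). zip u v) (pair_pmf (map_pmf FA UR) (map_pmf GB US))"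
      by (simp only: map_pair)
    also have "\<dots> = D" unfolding FAu GBu D_def ..
    finally show ?thesis .
  qed
  have J: "map_pmf (\<lambda>w. (X w, Y w)) P = pair_pmf \<mu> D"
    unfolding XY P_def by (rule indep_pair[OF gD])
  have Xf: "X = fst" by (auto simp: X_def fun_eq_iff)
  have MX: "map_pmf X P = \<mu>" unfolding Xf P_def by (rule map_fst_pair_pmf)
  have "map_pmf Y P = map_pmf snd (map_pmf (\<lambda>w. (X w, Y w)) P)" by (simp add: map_pmf_comp)
  then have MY: "map_pmf Y P = D" unfolding J by (simp add: map_snd_pair_pmf)
  have main: "prob_space.mutual_information (measure_pmf P) 2 (count_space (X ` space (measure_pmf P)))
           (count_space (Y ` space (measure_pmf P))) X Y = 0"
    by (rule mi_zero) (simp only: J MX MY)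
  show "let P = pair_pmf \<mu> (pair_pmf (pmf_of_set (mat_lists T (rA div K) cA))
                                       (pmf_of_set (mat_lists T cA (cB div L))));
             X = (\<lambda>(AB :: 'a mat \<times> 'a mat, _ :: 'a mat list \<times> 'a mat list). AB);
             Y = (\<lambda>((A, B), (Rs, Ss)).
                    map (\<lambda>n. (encF K T ap as A Rs (rho n), encG L T bp bs B Ss (rho n)))
                        (sorted_list_of_set W))
         in prob_space.mutual_information (measure_pmf P) 2
              (count_space (X ` space (measure_pmf P))) (count_space (Y ` space (measure_pmf P)))
              X Y = 0"
    using main unfolding Let_def P_def X_def Y_def UR_def US_def .
qed

lemma prim_inj_shift:
  fixes w :: "'a::field"
  assumes prim: "primitive_root_of_unity q w" and cop: "coprime q c" and N: "N \<le> q"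
  shows "inj_on (\<lambda>n. (w ^ (n - 1)) ^ c) {1..N}"
proof (rule inj_onI)
  fix n n' assume n: "n \<in> {1..N}" and n': "n' \<in> {1..N}" and eq: "(w ^ (n - 1)) ^ c = (w ^ (n' - 1)) ^ c"
  have "w ^ (c * (n - 1)) = w ^ (c * (n' - 1))" using eq by (simp add: mult.commute flip: power_mult)
  moreover have "n - 1 \<in> {..<q}" "n' - 1 \<in> {..<q}" using n n' N by auto
  ultimately have "n - 1 = n' - 1" using prim_inj[OF prim cop] by (auto dest: inj_onD)
  then show "n = n'" using n n' by auto
qed

lemma gasp_both:
  fixes \<omega> :: "'a::{field,finite}"
  assumes L1: "L \<ge> 1" and K1: "K \<ge> 1" and prim: "primitive_root_of_unity q \<omega>"
    and qgt: "q > Max (gasp_table r K L T)"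
    and asf: "\<And>i. i < T \<Longrightarrow> gasp_alpha_s r K L T i = K * L + c1 * i" and cop: "coprime q c1"
  shows "decodable K L T (gasp_alpha_p r K L T) (gasp_alpha_s r K L T)
                          (gasp_beta_p r K L T) (gasp_beta_s r K L T) rA cA cB (card (gasp_table r K L T)) (\<lambda>n. \<omega> ^ (n - 1))
        \<and> t_private K L T (gasp_alpha_p r K L T) (gasp_alpha_s r K L T)
                          (gasp_beta_p r K L T) (gasp_beta_s r K L T) rA cA cB (card (gasp_table r K L T)) (\<lambda>n. \<omega> ^ (n - 1))"
proof
  define D where "D = gasp_table r K L T"
  have finD: "finite D" unfolding D_def gasp_table_def by (rule finite_degree_table)
  have Dq: "D \<subseteq> {..<q}"
  proof
    fix d assume "d \<in> D"
    then have "d \<le> Max D" using finD by simp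
    then show "d \<in> {..<q}" using qgt unfolding D_def by simp
  qed
  have Nq: "card D \<le> q" using card_mono[OF _ Dq] by simp
  have injD: "inj_on (\<lambda>d. \<omega> ^ d) D"
    using inj_on_subset[OF prim_inj[OF prim, of 1] Dq] by simp
  have w0: "\<omega> \<noteq> 0" by (rule prim_nonzero[OF prim])
  show "decodable K L T (gasp_alpha_p r K L T) (gasp_alpha_s r K L T)
                          (gasp_beta_p r K L T) (gasp_beta_s r K L T) rA cA cB (card (gasp_table r K L T)) (\<lambda>n. \<omega> ^ (n - 1))"
  proof (rule decodable_generic)
    show "gasp_table r K L T = degree_table K L T (gasp_alpha_p r K L T) (gasp_alpha_s r K L T)
                          (gasp_beta_p r K L T) (gasp_beta_s r K L T)" by (simp add: gasp_table_def)
    show "inj_on (\<lambda>d. \<omega> ^ d) (gasp_table r K L T)" using injD unfolding D_def .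
  qed (auto simp: gasp_alpha_p_def gasp_beta_p_def gasp_alpha_s_def gasp_beta_s_def)
  show "t_private K L T (gasp_alpha_p r K L T) (gasp_alpha_s r K L T)
                          (gasp_beta_p r K L T) (gasp_beta_s r K L T) rA cA cB (card (gasp_table r K L T)) (\<lambda>n. \<omega> ^ (n - 1))"
  proof (rule private_generic[where Ea = "K * L" and ca = c1 and Eb = "K * L" and cb = 1])
    show "\<And>i. i < T \<Longrightarrow> gasp_alpha_s r K L T i = K * L + c1 * i" by (rule asf)
    show "\<And>j. j < T \<Longrightarrow> gasp_beta_s r K L T j = K * L + 1 * j" by (simp add: gasp_beta_s_def)
    show "\<And>n. n \<in> {1..card (gasp_table r K L T)} \<Longrightarrow> \<omega> ^ (n - 1) \<noteq> 0" using w0 by simp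
    show "inj_on (\<lambda>n. (\<omega> ^ (n - 1)) ^ c1) {1..card (gasp_table r K L T)}"
      by (rule prim_inj_shift[OF prim cop]) (use Nq in \<open>simp add: D_def\<close>)
    show "inj_on (\<lambda>n. (\<omega> ^ (n - 1)) ^ 1) {1..card (gasp_table r K L T)}"
      by (rule prim_inj_shift[OF prim]) (use Nq in \<open>simp_all add: D_def\<close>)
  qed
qed

theorem corollary1:
  fixes K L T q rA cA cB :: nat and \<omega> :: "'a::{field,finite}"
  assumes "L \<ge> 1" and "K \<ge> L" and "T \<ge> 1"
    and "prime CARD('a)"
    and "q > 0" and "primitive_root_of_unity q \<omega>"
    and "K dvd rA" and "L dvd cB"
  shows
    "(q > Max (gasp_table 1 K L T) \<and> coprime q K \<longrightarrow>
       (let N = card (gasp_table 1 K L T); rho = (\<lambda>n. \<omega> ^ (n - 1)) in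
          decodable K L T (gasp_alpha_p 1 K L T) (gasp_alpha_s 1 K L T)
                          (gasp_beta_p 1 K L T) (gasp_beta_s 1 K L T) rA cA cB N rho
        \<and> t_private K L T (gasp_alpha_p 1 K L T) (gasp_alpha_s 1 K L T)
                          (gasp_beta_p 1 K L T) (gasp_beta_s 1 K L T) rA cA cB N rho))
   \<and> (q > Max (gasp_table (min K T) K L T) \<longrightarrow>
       (let r = min K T; N = card (gasp_table r K L T); rho = (\<lambda>n. \<omega> ^ (n - 1)) in
          decodable K L T (gasp_alpha_p r K L T) (gasp_alpha_s r K L T)
                          (gasp_beta_p r K L T) (gasp_beta_s r K L T) rA cA cB N rho
        \<and> t_private K L T (gasp_alpha_p r K L T) (gasp_alpha_s r K L T)
                          (gasp_beta_p r K L T) (gasp_beta_s r K L T) rA cA cB N rho))"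
proof (intro conjI impI)
  have K1: "K \<ge> 1" using assms(1,2) by simp
  assume h: "q > Max (gasp_table 1 K L T) \<and> coprime q K"
  have asf: "\<And>i. i < T \<Longrightarrow> gasp_alpha_s 1 K L T i = K * L + K * i"
    by (simp add: gasp_alpha_s_def GAP_def)
  show "let N = card (gasp_table 1 K L T); rho = (\<lambda>n. \<omega> ^ (n - 1)) in
          decodable K L T (gasp_alpha_p 1 K L T) (gasp_alpha_s 1 K L T)
                          (gasp_beta_p 1 K L T) (gasp_beta_s 1 K L T) rA cA cB N rho
        \<and> t_private K L T (gasp_alpha_p 1 K L T) (gasp_alpha_s 1 K L T)
                          (gasp_beta_p 1 K L T) (gasp_beta_s 1 K L T) rA cA cB N rho"
    unfolding Let_def using gasp_both[OF assms(1) K1 assms(6) conjunct1[OF h] asf conjunct2[OF h]] .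
next
  have K1: "K \<ge> 1" using assms(1,2) by simp
  assume h: "q > Max (gasp_table (min K T) K L T)"
  have asf: "gasp_alpha_s (min K T) K L T i = K * L + 1 * i" if i: "i < T" for i
  proof (cases "K \<le> T")
    case True
    then show ?thesis by (simp add: gasp_alpha_s_def GAP_def min_def mult.commute)
  next
    case False
    then show ?thesis using i by (simp add: gasp_alpha_s_def GAP_def min_def)
  qed
  show "let r = min K T; N = card (gasp_table r K L T); rho = (\<lambda>n. \<omega> ^ (n - 1)) in
          decodable K L T (gasp_alpha_p r K L T) (gasp_alpha_s r K L T)
                          (gasp_beta_p r K L T) (gasp_beta_s r K L T) rA cA cB N rho
        \<and> t_private K L T (gasp_alpha_p r K L T) (gasp_alpha_s r K L T)
                          (gasp_beta_p r K L T) (gasp_beta_s r K L T) rA cA cB N rho"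
    unfolding Let_def using gasp_both[OF assms(1) K1 assms(6) h asf] by simp
qed

end
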